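(* Let $p(x),q(x)\in\mathbb{C}[x]$, let $b\geq 2$ be an integer, and let $\alpha=(\alpha_0,\dots,\alpha_{m-1})\in\mathbb{N}^m$. Then the function $n\mapsto u_{p,q,b,\alpha}(n)$ has a rational generating function; that is, there exist $P(x),Q(x)\in\mathbb{C}[x]$ with $Q(0)\neq 0$ such that $\sum_{n\geq 0}u_{p,q,b,\alpha}(n)x^n=P(x)/Q(x)$ as formal power series.
   Context: $\mathbb{N}=\{0,1,2,\dots\}$. For $n\geq 0$ define $F_{p,q,b,n}(x)=q(x)\prod_{i=0}^{n-1}p(x^{b^i})=\sum_{i\geq 0}c_i(n)x^i$, with the convention $c_i(n)=0$ for $i<0$. Define $$u_{p,q,b,\alpha}(n)=\sum_{k} c_k(n)^{\alpha_0}c_{k+1}(n)^{\alpha_1}\cdots c_{k+m-1}(n)^{\alpha_{m-1}},$$ the sum over all integers $k$ (only finitely many terms are nonzero when some exponent is positive; take $0^0=1$ and assume $\alpha\neq 0$). *)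

theory Defs
  imports "HOL-Analysis.Analysis" "HOL-Computational_Algebra.Computational_Algebra"
begin

definition Fpoly :: "complex poly \<Rightarrow> complex poly \<Rightarrow> nat \<Rightarrow> nat \<Rightarrow> complex poly" where
  "Fpoly p q b n = q * (\<Prod>i<n. pcompose p (monom 1 (b ^ i)))"

definition cF :: "complex poly \<Rightarrow> complex poly \<Rightarrow> nat \<Rightarrow> nat \<Rightarrow> int \<Rightarrow> complex" where
  "cF p q b n i = (if i < 0 then 0 else coeff (Fpoly p q b n) (nat i))"

text \<open>u_{p,q,b,alpha}(n): sum over all integers k of
  prod_{j<m} c_{k+j}(n)^alpha_j, where alpha = (alpha_0,...,alpha_{m-1}) is a list
  (only finitely many terms are nonzero when some alpha_j > 0).\<close>
definition u :: "complex poly \<Rightarrow> complex poly \<Rightarrow> nat \<Rightarrow> nat list \<Rightarrow> nat \<Rightarrow> complex" where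
  "u p q b \<alpha> n = (\<Sum>\<^sub>\<infinity>k\<in>(UNIV::int set).
      \<Prod>j<length \<alpha>. cF p q b n (k + int j) ^ (\<alpha> ! j))"

end

theory Submission
  imports Defs "HOL-Library.Function_Algebras"
begin
lemma lin_rec_exists:
  fixes v :: "nat \<Rightarrow> 'x \<Rightarrow> complex" and H :: "'x set" and J :: "'j set"
    and T :: "'x \<Rightarrow> 'j \<Rightarrow> complex" and \<sigma> :: "'x \<Rightarrow> 'j \<Rightarrow> 'x"
  assumes H: "finite H" and J: "finite J"
    and supp: "\<And>n h. h \<notin> H \<Longrightarrow> v n h = 0"
    and rec: "\<And>n h. v (Suc n) h = (\<Sum>j\<in>J. T h j * v n (\<sigma> h j))"
  shows "\<exists>k (a::nat\<Rightarrow>complex). \<forall>n h. v (n+k) h = (\<Sum>i<k. a i * v (n+i) h)"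
proof -
  interpret fv: vector_space "\<lambda>(c::complex) (f::'x\<Rightarrow>complex). (\<lambda>x. c * f x)"
    by unfold_locales (auto simp: fun_eq_iff algebra_simps)
  define \<delta> where "\<delta> h = (\<lambda>x::'x. if x = h then (1::complex) else 0)" for h
  have sumapp: "(\<Sum>i\<in>S. f i) x = (\<Sum>i\<in>S. f i x)" for S and f :: "'z \<Rightarrow> 'x \<Rightarrow> complex" and x
    by (induction S rule: infinite_finite_induct) auto
  have inspan: "v n \<in> fv.span (\<delta> ` H)" for n
  proof -
    have "v n = (\<Sum>h\<in>H. (\<lambda>x. v n h * \<delta> h x))"
    proof
      fix x
      show "v n x = (\<Sum>h\<in>H. (\<lambda>x. v n h * \<delta> h x)) x"
      proof -
        have "(\<Sum>h\<in>H. (\<lambda>x. v n h * \<delta> h x)) x = (\<Sum>h\<in>H. if x = h then v n h else 0)"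
          unfolding sumapp \<delta>_def by (rule sum.cong) auto
        also have "\<dots> = v n x" using H supp[of x n] by (cases "x \<in> H") (simp_all add: sum.delta')
        finally show ?thesis by simp
      qed
    qed
    also have "\<dots> \<in> fv.span (\<delta> ` H)"
      by (intro fv.span_sum fv.span_scale fv.span_base) auto
    finally show ?thesis .
  qed
  have ex: "\<exists>k. v k \<in> fv.span (v ` {..<k})"
  proof (rule ccontr)
    assume nex: "\<not> ?thesis"
    have ind: "fv.independent (v ` {..<k}) \<and> card (v ` {..<k}) = k" for k
    proof (induction k)
      case 0 then show ?case by (simp add: fv.independent_empty)
    next
      case (Suc k)
      have nk: "v k \<notin> fv.span (v ` {..<k})" using nex by blast
      have nk2: "v k \<notin> v ` {..<k}"
      proof
        assume "v k \<in> v ` {..<k}"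
        then have "v k \<in> fv.span (v ` {..<k})" by (rule fv.span_base)
        with nk show False by contradiction
      qed
      have eq: "v ` {..<Suc k} = insert (v k) (v ` {..<k})" by (auto simp: lessThan_Suc)
      have ik: "fv.independent (v ` {..<k})" using Suc.IH by (rule conjunct1)
      have ck: "card (v ` {..<k}) = k" using Suc.IH by (rule conjunct2)
      have i1: "fv.independent (insert (v k) (v ` {..<k}))"
        by (rule fv.independent_insertI[OF nk ik])
      have c1: "card (insert (v k) (v ` {..<k})) = Suc (card (v ` {..<k}))"
        by (rule card_insert_disjoint) (simp_all add: nk2)
      show ?case unfolding eq using i1 c1 ck by simp
    qed
    let ?k = "Suc (card (\<delta> ` H))"
    have "v ` {..<?k} \<subseteq> fv.span (\<delta> ` H)" using inspan by blast
    then have "card (v ` {..<?k}) \<le> card (\<delta> ` H)"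
      using fv.independent_span_bound[OF finite_imageI[OF H] conjunct1[OF ind]] by blast
    then show False using ind[of ?k] by simp
  qed
  define k where "k = (LEAST k. v k \<in> fv.span (v ` {..<k}))"
  have kin: "v k \<in> fv.span (v ` {..<k})" unfolding k_def using ex by (rule LeastI_ex)
  have knot: "v j \<notin> fv.span (v ` {..<j})" if "j < k" for j
    using not_less_Least[of j "\<lambda>k. v k \<in> fv.span (v ` {..<k})"] that unfolding k_def by blast
  have inj: "inj_on v {..<k}"
  proof (rule inj_onI)
    fix i j assume i: "i \<in> {..<k}" and j: "j \<in> {..<k}" and e: "v i = v j"
    show "i = j"
    proof (rule ccontr)
      assume "i \<noteq> j"
      then consider "i < j" | "j < i" by linarith
      then show False
      proof cases
        case 1
        then have "v j \<in> v ` {..<j}" using e by (metis imageI lessThan_iff)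
        then have "v j \<in> fv.span (v ` {..<j})" by (rule fv.span_base)
        then show False using knot j by auto
      next
        case 2
        then have "v i \<in> v ` {..<i}" using e by (metis imageI lessThan_iff)
        then have "v i \<in> fv.span (v ` {..<i})" by (rule fv.span_base)
        then show False using knot i by auto
      qed
    qed
  qed
  have sf: "fv.span (v ` {..<k}) = range (\<lambda>c. \<Sum>y\<in>v ` {..<k}. (\<lambda>x. c y * y x))"
    by (rule fv.span_finite) simp
  have "v k \<in> range (\<lambda>c. \<Sum>y\<in>v ` {..<k}. (\<lambda>x. c y * y x))"
    using kin unfolding sf .
  then obtain c where c: "v k = (\<Sum>y\<in>v ` {..<k}. (\<lambda>x. c y * y x))"
    by blast
  define a where "a i = c (v i)" for i
  have base: "v k h = (\<Sum>i<k. a i * v i h)" for h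
  proof -
    have "v k h = (\<Sum>y\<in>v ` {..<k}. (\<lambda>x. c y * y x)) h" by (rule fun_cong[OF c])
    also have "\<dots> = (\<Sum>y\<in>v ` {..<k}. c y * y h)" by (rule sumapp)
    finally have "v k h = (\<Sum>y\<in>v ` {..<k}. c y * y h)" .
    also have "\<dots> = (\<Sum>i<k. a i * v i h)"
      by (subst sum.reindex[OF inj]) (simp add: a_def)
    finally show ?thesis .
  qed
  have "\<forall>h. v (n+k) h = (\<Sum>i<k. a i * v (n+i) h)" for n
  proof (induction n)
    case 0
    show ?case
    proof
      fix h
      show "v (0 + k) h = (\<Sum>i<k. a i * v (0 + i) h)" using base[of h] by simp
    qed
  next
    case (Suc n)
    show ?case
    proof
      fix h
      have IH: "\<And>h. v (n+k) h = (\<Sum>i<k. a i * v (n+i) h)" using Suc by blast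
      have "v (Suc n + k) h = (\<Sum>j\<in>J. T h j * v (n+k) (\<sigma> h j))"
        by (simp only: add_Suc rec)
      also have "\<dots> = (\<Sum>j\<in>J. T h j * (\<Sum>i<k. a i * v (n+i) (\<sigma> h j)))"
        by (simp only: IH)
      also have "\<dots> = (\<Sum>j\<in>J. \<Sum>i<k. a i * (T h j * v (n+i) (\<sigma> h j)))"
        by (simp add: sum_distrib_left mult.left_commute)
      also have "\<dots> = (\<Sum>i<k. \<Sum>j\<in>J. a i * (T h j * v (n+i) (\<sigma> h j)))"
        by (rule sum.swap)
      also have "\<dots> = (\<Sum>i<k. a i * (\<Sum>j\<in>J. T h j * v (n+i) (\<sigma> h j)))"
        by (simp add: sum_distrib_left)
      also have "\<dots> = (\<Sum>i<k. a i * v (Suc n + i) h)"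
        by (simp only: add_Suc rec)
      finally show "v (Suc n + k) h = (\<Sum>i<k. a i * v (Suc n + i) h)" .
    qed
  qed
  then show ?thesis by (intro exI[of _ k] exI[of _ a]) blast
qed

lemma rec_gf:
  fixes u :: "nat \<Rightarrow> complex" and a :: "nat \<Rightarrow> complex"
  assumes rec: "\<And>n. u (n+k) = (\<Sum>i<k. a i * u (n+i))"
  shows "\<exists>P Q :: complex poly. poly Q 0 \<noteq> 0 \<and> Abs_fps u = fps_of_poly P / fps_of_poly Q"
proof -
  define Q :: "complex poly" where "Q = 1 - (\<Sum>i<k. monom (a i) (k - i))"
  have Q0: "poly Q 0 = 1"
    unfolding Q_def by (simp add: poly_sum poly_monom zero_power)
  have cQ: "coeff Q j = (if j = 0 then 1 else 0) - (\<Sum>i<k. if k - i = j then a i else 0)" for j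
    unfolding Q_def by (simp add: coeff_sum coeff_monom coeff_1)
  define R where "R = fps_of_poly Q * Abs_fps u"
  have R0: "R $ n = 0" if "n \<ge> k" for n
  proof -
    have "R $ n = (\<Sum>j=0..n. coeff Q j * u (n - j))"
      unfolding R_def by (simp add: fps_mult_nth)
    also have "\<dots> = (\<Sum>j=0..n. (if j = 0 then u (n - j) else 0) -
        (\<Sum>i<k. (if k - i = j then a i * u (n - j) else 0)))"
    proof (rule sum.cong[OF refl])
      fix j
      show "coeff Q j * u (n - j) = (if j = 0 then u (n - j) else 0) -
        (\<Sum>i<k. (if k - i = j then a i * u (n - j) else 0))"
        unfolding cQ left_diff_distrib sum_distrib_right by (auto intro!: sum.cong)
    qed
    also have "\<dots> = (\<Sum>j=0..n. (if j = 0 then u (n - j) else 0)) -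
        (\<Sum>j=0..n. \<Sum>i<k. (if k - i = j then a i * u (n - j) else 0))"
      by (rule sum_subtractf)
    also have "(\<Sum>j=0..n. (if j = 0 then u (n - j) else 0)) = u n"
      by (simp add: sum.delta')
    also have "(\<Sum>j=0..n. \<Sum>i<k. (if k - i = j then a i * u (n - j) else 0))
        = (\<Sum>i<k. \<Sum>j=0..n. (if k - i = j then a i * u (n - j) else 0))"
      by (rule sum.swap)
    also have "\<dots> = (\<Sum>i<k. a i * u ((n - k) + i))"
    proof (rule sum.cong)
      fix i assume "i \<in> {..<k}"
      then have "k - i \<in> {0..n}" "n - (k - i) = (n - k) + i" using that by auto
      then show "(\<Sum>j=0..n. (if k - i = j then a i * u (n - j) else 0)) = a i * u ((n - k) + i)"
        by (simp add: sum.delta')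
    qed simp
    also have "\<dots> = u n" using rec[of "n - k"] that by simp
    finally show ?thesis by simp
  qed
  define P :: "complex poly" where "P = (\<Sum>n<k. monom (R $ n) n)"
  have PR: "fps_of_poly P = R"
  proof (rule fps_ext)
    fix n
    show "fps_of_poly P $ n = R $ n"
      using R0[of n] by (simp add: P_def coeff_sum coeff_monom)
  qed
  have Qnz: "fps_of_poly Q \<noteq> 0"
  proof
    assume "fps_of_poly Q = 0"
    then have "fps_of_poly Q $ 0 = 0" by simp
    then have "coeff Q 0 = 0" by simp
    then show False using Q0 by (simp add: poly_0_coeff_0)
  qed
  have "Abs_fps u = fps_of_poly P / fps_of_poly Q"
    unfolding PR R_def using Qnz by simp
  then show ?thesis using Q0 by (intro exI[of _ P] exI[of _ Q]) simp
qed

definition Gp :: "complex poly \<Rightarrow> nat \<Rightarrow> nat \<Rightarrow> complex poly" where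
  "Gp p b n = (\<Prod>i<n. pcompose p (monom 1 (b ^ i)))"

lemma pcompose_power_left': "pcompose (r ^ a) s = (pcompose r s) ^ a"
  by (induction a) (simp_all add: pcompose_1 pcompose_mult)

lemma monom_pcompose_monom: "pcompose (monom (1::complex) a) (monom 1 c) = monom 1 (a * c)"
proof -
  have "pcompose (monom (1::complex) a) (monom 1 c) = (pcompose [:0,1:] (monom 1 c)) ^ a"
    by (simp add: monom_altdef pcompose_power_left')
  also have "pcompose [:0,1::complex:] (monom 1 c) = monom 1 c"
    by (simp add: pcompose_pCons)
  finally show ?thesis by (simp add: monom_power mult.commute)
qed

lemma Gp_Suc: "Gp p b (Suc n) = p * pcompose (Gp p b n) (monom 1 b)"
proof -
  have "Gp p b (Suc n) = pcompose p (monom 1 1) * (\<Prod>i<n. pcompose p (monom 1 (b ^ Suc i)))"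
    unfolding Gp_def by (subst prod.lessThan_Suc_shift) simp
  also have "pcompose p (monom 1 1) = p"
    by (metis monom_altdef pcompose_idR power_one_right smult_1_left)
  also have "(\<Prod>i<n. pcompose p (monom 1 (b ^ Suc i))) = pcompose (Gp p b n) (monom 1 b)"
    unfolding Gp_def pcompose_prod
    by (rule prod.cong) (simp_all add: monom_pcompose_monom mult.commute flip: pcompose_assoc)
  finally show ?thesis .
qed

lemma coeff_pcompose_monom:
  assumes b: "b > 0"
  shows "coeff (pcompose g (monom (1::complex) b)) j = (if b dvd j then coeff g (j div b) else 0)"
proof (induction g arbitrary: j rule: pCons_induct)
  case 0 then show ?case by simp
next
  case (pCons a g)
  have e: "pcompose (pCons a g) (monom 1 b) = [:a:] + monom 1 b * pcompose g (monom 1 b)"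
    by (simp add: pcompose_pCons)
  show ?case
  proof (cases "j = 0")
    case True then show ?thesis using b by (simp add: e coeff_monom_mult)
  next
    case False
    show ?thesis
    proof (cases "j < b")
      case True
      then have "\<not> b dvd j" using False by (meson dvd_imp_le neq0_conv not_le)
      then show ?thesis using True False by (simp add: e coeff_monom_mult coeff_pCons split: nat.split)
    next
      case jb: False
      have d: "b dvd (j - b) \<longleftrightarrow> b dvd j" using jb by (simp add: dvd_minus_self)
      have jb': "b \<le> j" using jb by simp
      have q0: "j div b = Suc ((j - b) div b)" by (rule le_div_geq[OF b jb'])
      have q: "(j - b) div b = j div b - 1" using q0 by simp
      have q1: "j div b \<ge> 1" using q0 by simp
      show ?thesis using jb False pCons.IH[of "j - b"] d q q1
        by (auto simp: e coeff_monom_mult coeff_pCons split: nat.split)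
    qed
  qed
qed

lemma coeff_mult_int:
  fixes A B :: "complex poly" and k :: int
  shows "(if k < 0 then 0 else coeff (A * B) (nat k)) =
    (\<Sum>l\<le>degree A. coeff A l * (if k - int l < 0 then 0 else coeff B (nat (k - int l))))"
proof (cases "k < 0")
  case True then show ?thesis by simp
next
  case False
  define K where "K = nat k"
  have kK: "k = int K" using False K_def by simp
  define f where "f l = coeff A l * (if k - int l < 0 then 0 else coeff B (nat (k - int l)))" for l
  have "coeff (A * B) K = (\<Sum>l\<le>K. coeff A l * coeff B (K - l))" by (simp add: coeff_mult)
  also have "\<dots> = (\<Sum>l\<le>K. f l)"
    by (rule sum.cong) (auto simp: f_def kK nat_diff_distrib)
  also have "\<dots> = (\<Sum>l\<le>K + degree A. f l)"
    by (rule sum.mono_neutral_left) (auto simp: f_def kK)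
  also have "\<dots> = (\<Sum>l\<le>degree A. f l)"
    by (rule sum.mono_neutral_right) (auto simp: f_def coeff_eq_0)
  finally show ?thesis using False unfolding f_def K_def by simp
qed

definition gg :: "complex poly \<Rightarrow> nat \<Rightarrow> nat \<Rightarrow> int \<Rightarrow> complex" where
  "gg p b n k = (if k < 0 then 0 else coeff (Gp p b n) (nat k))"

lemma gg_Suc:
  assumes b: "b > 0"
  shows "gg p b (Suc n) k = (\<Sum>l\<le>degree p. coeff p l *
     (if int b dvd (k - int l) then gg p b n ((k - int l) div int b) else 0))"
proof -
  have "gg p b (Suc n) k = (\<Sum>l\<le>degree p. coeff p l * (if k - int l < 0 then 0
      else coeff (pcompose (Gp p b n) (monom 1 b)) (nat (k - int l))))"
    unfolding gg_def Gp_Suc by (rule coeff_mult_int)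
  also have "\<dots> = (\<Sum>l\<le>degree p. coeff p l *
     (if int b dvd (k - int l) then gg p b n ((k - int l) div int b) else 0))"
  proof (rule sum.cong[OF refl])
    fix l
    show "coeff p l * (if k - int l < 0 then 0
      else coeff (pcompose (Gp p b n) (monom 1 b)) (nat (k - int l))) =
      coeff p l * (if int b dvd (k - int l) then gg p b n ((k - int l) div int b) else 0)"
    proof (cases "k - int l < 0")
      case True
      then have "(k - int l) div int b < 0" using b by (simp add: div_neg_pos_less0)
      then show ?thesis using True by (simp add: gg_def)
    next
      case False
      define j where "j = nat (k - int l)"
      have jj: "k - int l = int j" using False j_def by simp
      have "(int j) div (int b) = int (j div b)" by (simp add: zdiv_int)
      then show ?thesis using False b unfolding jj
        by (simp add: coeff_pcompose_monom gg_def flip: j_def)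
    qed
  qed
  finally show ?thesis .
qed

lemma cF_expand:
  "cF p q b n k = (\<Sum>l\<le>degree q. coeff q l * gg p b n (k - int l))"
proof -
  have "cF p q b n k = (if k < 0 then 0 else coeff (q * Gp p b n) (nat k))"
    unfolding cF_def Fpoly_def Gp_def by simp
  also have "\<dots> = (\<Sum>l\<le>degree q. coeff q l * gg p b n (k - int l))"
    unfolding coeff_mult_int gg_def by simp
  finally show ?thesis .
qed

lemma gg_support:
  assumes "gg p b n k \<noteq> 0"
  shows "0 \<le> k \<and> k \<le> int (degree (Gp p b n))"
  using assms unfolding gg_def
  by (metis coeff_eq_0 int_nat_eq linorder_not_less nat_le_iff)

lemma infsum_fin:
  fixes f :: "'a \<Rightarrow> complex"
  assumes "finite S" "\<And>x. x \<notin> S \<Longrightarrow> f x = 0"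
  shows "infsum f UNIV = sum f S"
proof -
  have "infsum f UNIV = infsum f S"
    by (rule infsum_cong_neutral) (use assms in auto)
  then show ?thesis using assms by simp
qed

definition fsupp :: "('a \<Rightarrow> complex) \<Rightarrow> bool" where
  "fsupp f \<longleftrightarrow> finite {x. f x \<noteq> 0}"

lemma infsum_fsupp: "fsupp f \<Longrightarrow> infsum f UNIV = sum f {x. f x \<noteq> 0}"
  unfolding fsupp_def by (rule infsum_fin) auto

lemma infsum_sum_fsupp:
  fixes \<phi> :: "'b \<Rightarrow> 'a \<Rightarrow> complex"
  assumes F: "finite F" and fs: "\<And>y. y \<in> F \<Longrightarrow> fsupp (\<phi> y)"
  shows "infsum (\<lambda>x. \<Sum>y\<in>F. \<phi> y x) UNIV = (\<Sum>y\<in>F. infsum (\<phi> y) UNIV)"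
proof -
  define S where "S = (\<Union>y\<in>F. {x. \<phi> y x \<noteq> 0})"
  have S: "finite S" unfolding S_def using F fs by (auto simp: fsupp_def)
  have "infsum (\<lambda>x. \<Sum>y\<in>F. \<phi> y x) UNIV = (\<Sum>x\<in>S. \<Sum>y\<in>F. \<phi> y x)"
    by (rule infsum_fin[OF S]) (auto simp: S_def intro!: sum.neutral)
  also have "\<dots> = (\<Sum>y\<in>F. \<Sum>x\<in>S. \<phi> y x)" by (rule sum.swap)
  also have "\<dots> = (\<Sum>y\<in>F. infsum (\<phi> y) UNIV)"
    by (rule sum.cong[OF refl], rule infsum_fin[OF S, symmetric]) (auto simp: S_def)
  finally show ?thesis .
qed

lemma fsupp_prod:
  fixes g :: "int \<Rightarrow> complex"
  assumes I: "finite I" and i0: "i0 \<in> I" and g: "fsupp g"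
  shows "fsupp (\<lambda>k. \<Prod>i\<in>I. g (k + c i))"
proof -
  have "{k. (\<Prod>i\<in>I. g (k + c i)) \<noteq> 0} \<subseteq> (\<lambda>j. j - c i0) ` {x. g x \<noteq> 0}"
  proof
    fix k assume "k \<in> {k. (\<Prod>i\<in>I. g (k + c i)) \<noteq> 0}"
    then have "g (k + c i0) \<noteq> 0" using I i0 by auto
    then show "k \<in> (\<lambda>j. j - c i0) ` {x. g x \<noteq> 0}" by (intro image_eqI[of _ _ "k + c i0"]) auto
  qed
  then show ?thesis using g unfolding fsupp_def by (meson finite_imageI finite_subset)
qed

lemma fsupp_gg: "fsupp (gg p b n)"
proof -
  have "{x. gg p b n x \<noteq> 0} \<subseteq> {0..int (degree (Gp p b n))}"
    using gg_support by fastforce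
  then show ?thesis unfolding fsupp_def by (meson finite_atLeastAtMost_int finite_subset)
qed

lemma fsupp_cmult: "fsupp f \<Longrightarrow> fsupp (\<lambda>x. c * f x)"
  unfolding fsupp_def by (rule finite_subset[of _ "{x. f x \<noteq> 0}"]) auto

lemma infsum_split_mod:
  fixes F :: "int \<Rightarrow> complex"
  assumes F: "fsupp F" and b: "b > 0"
  shows "infsum F UNIV = (\<Sum>r<b. infsum (\<lambda>K. F (int b * K + int r)) UNIV)"
proof -
  define S where "S = {x. F x \<noteq> 0}"
  have S: "finite S" using F unfolding fsupp_def S_def .
  define T where "T = (\<lambda>k. k div int b) ` S"
  have T: "finite T" unfolding T_def using S by simp
  define g where "g = (\<lambda>(K::int, r::nat). int b * K + int r)"
  have inj: "inj_on g (T \<times> {..<b})"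
  unfolding inj_on_def
  proof (intro ballI impI)
    fix x y assume x: "x \<in> T \<times> {..<b}" and y: "y \<in> T \<times> {..<b}" and exy: "g x = g y"
    obtain K r where xk: "x = (K, r)" by (cases x)
    obtain K' r' where yk: "y = (K', r')" by (cases y)
    have r: "r \<in> {..<b}" and r': "r' \<in> {..<b}" using x y xk yk by auto
    have e: "g (K, r) = g (K', r')" using exy xk yk by simp
    have 1: "(int b * K + int r) mod int b = int r" using r by simp
    have 2: "(int b * K' + int r') mod int b = int r'" using r' by simp
    have "int r = (int b * K + int r) mod int b" using 1 by simp
    also have "\<dots> = (int b * K' + int r') mod int b" using e by (simp add: g_def)
    also have "\<dots> = int r'" using 2 by simp
    finally have "r = r'" by simp
    then show "x = y" using e b xk yk by (simp add: g_def)
  qed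
  have Ssub: "S \<subseteq> g ` (T \<times> {..<b})"
  proof
    fix k assume k: "k \<in> S"
    have "k = g (k div int b, nat (k mod int b))" using b by (simp add: g_def)
    moreover have "nat (k mod int b) \<in> {..<b}" using b by (simp add: nat_less_iff)
    ultimately show "k \<in> g ` (T \<times> {..<b})" using k unfolding T_def by blast
  qed
  have "infsum F UNIV = sum F (g ` (T \<times> {..<b}))"
    by (rule infsum_fin) (use T Ssub in \<open>auto simp: S_def\<close>)
  also have "\<dots> = (\<Sum>(K,r)\<in>T \<times> {..<b}. F (int b * K + int r))"
    by (subst sum.reindex[OF inj]) (simp add: g_def case_prod_beta')
  also have "\<dots> = (\<Sum>r<b. \<Sum>K\<in>T. F (int b * K + int r))"
    by (subst sum.cartesian_product[symmetric]) (rule sum.swap)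
  also have "\<dots> = (\<Sum>r<b. infsum (\<lambda>K. F (int b * K + int r)) UNIV)"
  proof (rule sum.cong[OF refl])
    fix r assume r: "r \<in> {..<b}"
    show "(\<Sum>K\<in>T. F (int b * K + int r)) = infsum (\<lambda>K. F (int b * K + int r)) UNIV"
    proof (rule infsum_fin[OF T, symmetric])
      fix K assume K: "K \<notin> T"
      show "F (int b * K + int r) = 0"
      proof (rule ccontr)
        assume "F (int b * K + int r) \<noteq> 0"
        then have "int b * K + int r \<in> S" by (simp add: S_def)
        moreover have "(int b * K + int r) div int b = K" using b r by simp
        ultimately have "K \<in> T" unfolding T_def by (metis image_eqI)
        then show False using K by simp
      qed
    qed
  qed
  finally show ?thesis .
qed

definition W :: "complex poly \<Rightarrow> nat \<Rightarrow> 'i set \<Rightarrow> nat \<Rightarrow> ('i \<Rightarrow> int) \<Rightarrow> complex" where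
  "W p b I n h = infsum (\<lambda>k. \<Prod>i\<in>I. gg p b n (k + h i)) UNIV"

lemma W_cong: "(\<And>i. i \<in> I \<Longrightarrow> h i = h' i) \<Longrightarrow> W p b I n h = W p b I n h'"
  unfolding W_def by (intro arg_cong2[where f=infsum] ext prod.cong) auto

lemma W_Suc:
  assumes b: "b > 0" and I: "finite I" and i0: "i0 \<in> I"
  shows "W p b I (Suc n) h = (\<Sum>f\<in>PiE I (\<lambda>_. {..degree p}). (\<Prod>i\<in>I. coeff p (f i)) *
    (\<Sum>r<b. if (\<forall>i\<in>I. int b dvd (int r + (h i - int (f i))))
       then W p b I n (\<lambda>i. (int r + (h i - int (f i))) div int b) else 0))"
proof -
  define gh where "gh j = (if int b dvd j then gg p b n (j div int b) else 0)" for j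
  have fs_gh: "fsupp gh"
  proof -
    have "{j. gh j \<noteq> 0} \<subseteq> (\<lambda>K. int b * K) ` {x. gg p b n x \<noteq> 0}"
    proof
      fix j assume "j \<in> {j. gh j \<noteq> 0}"
      then have "int b dvd j" "gg p b n (j div int b) \<noteq> 0" by (auto simp: gh_def split: if_splits)
      then show "j \<in> (\<lambda>K. int b * K) ` {x. gg p b n x \<noteq> 0}"
        by (intro image_eqI[of _ _ "j div int b"]) auto
    qed
    then show ?thesis using fsupp_gg[of p b n] unfolding fsupp_def
      by (meson finite_imageI finite_subset)
  qed
  define PF where "PF = PiE I (\<lambda>_. {..degree p})"
  define cp where "cp f = (\<Prod>i\<in>I. coeff p (f i))" for f :: "'a \<Rightarrow> nat"
  have step1: "(\<Prod>i\<in>I. gg p b (Suc n) (k + h i)) =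
      (\<Sum>f\<in>PF. cp f * (\<Prod>i\<in>I. gh (k + (h i - int (f i)))))" for k
  proof -
    have "(\<Prod>i\<in>I. gg p b (Suc n) (k + h i)) =
        (\<Prod>i\<in>I. \<Sum>l\<le>degree p. coeff p l * gh (k + (h i - int l)))"
      by (rule prod.cong[OF refl]) (simp add: gg_Suc[OF b] gh_def algebra_simps)
    also have "\<dots> = (\<Sum>f\<in>PF. \<Prod>i\<in>I. coeff p (f i) * gh (k + (h i - int (f i))))"
      unfolding PF_def by (rule prod_sum_PiE) (use I in auto)
    also have "\<dots> = (\<Sum>f\<in>PF. cp f * (\<Prod>i\<in>I. gh (k + (h i - int (f i)))))"
      by (simp add: cp_def prod.distrib)
    finally show ?thesis .
  qed
  have PF: "finite PF" unfolding PF_def using I by (simp add: finite_PiE)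
  have Z: "infsum (\<lambda>k. \<Prod>i\<in>I. gh (k + c i)) UNIV =
      (\<Sum>r<b. if (\<forall>i\<in>I. int b dvd (int r + c i))
       then W p b I n (\<lambda>i. (int r + c i) div int b) else 0)" for c
  proof -
    have "infsum (\<lambda>k. \<Prod>i\<in>I. gh (k + c i)) UNIV =
        (\<Sum>r<b. infsum (\<lambda>K. \<Prod>i\<in>I. gh (int b * K + int r + c i)) UNIV)"
      by (rule infsum_split_mod[OF fsupp_prod[OF I i0 fs_gh] b])
    also have "\<dots> = (\<Sum>r<b. if (\<forall>i\<in>I. int b dvd (int r + c i))
       then W p b I n (\<lambda>i. (int r + c i) div int b) else 0)"
    proof (rule sum.cong[OF refl])
      fix r
      have gi: "gh (int b * K + int r + c i) = (if int b dvd (int r + c i)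
          then gg p b n (K + (int r + c i) div int b) else 0)" for K i
      proof -
        have e: "int b * K + int r + c i = (int r + c i) + int b * K" by simp
        have d: "int b dvd (int r + c i) + int b * K \<longleftrightarrow> int b dvd (int r + c i)"
          by (rule dvd_add_left_iff) simp
        have q: "((int r + c i) + int b * K) div int b = K + (int r + c i) div int b"
          using b by simp
        show ?thesis unfolding gh_def e d q ..
      qed
      show "infsum (\<lambda>K. \<Prod>i\<in>I. gh (int b * K + int r + c i)) UNIV =
        (if (\<forall>i\<in>I. int b dvd (int r + c i)) then W p b I n (\<lambda>i. (int r + c i) div int b) else 0)"
      proof (cases "\<forall>i\<in>I. int b dvd (int r + c i)")
        case True
        then show ?thesis unfolding gi W_def by (simp cong: prod.cong)
      next
        case False
        then obtain i1 where "i1 \<in> I" "\<not> int b dvd (int r + c i1)" by blast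
        then have "(\<Prod>i\<in>I. gh (int b * K + int r + c i)) = 0" for K
          using I by (intro prod_zero) (auto simp: gi)
        then have z: "(\<lambda>K. \<Prod>i\<in>I. gh (int b * K + int r + c i)) = (\<lambda>K. 0)" by (rule ext)
        show ?thesis unfolding if_not_P[OF False] z by simp
      qed
    qed
    finally show ?thesis .
  qed
  have "W p b I (Suc n) h = infsum (\<lambda>k. \<Sum>f\<in>PF. cp f * (\<Prod>i\<in>I. gh (k + (h i - int (f i))))) UNIV"
    unfolding W_def step1 ..
  also have "\<dots> = (\<Sum>f\<in>PF. infsum (\<lambda>k. cp f * (\<Prod>i\<in>I. gh (k + (h i - int (f i))))) UNIV)"
    by (rule infsum_sum_fsupp[OF PF]) (intro fsupp_cmult fsupp_prod[OF I i0 fs_gh])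
  also have "\<dots> = (\<Sum>f\<in>PF. cp f * infsum (\<lambda>k. (\<Prod>i\<in>I. gh (k + (h i - int (f i))))) UNIV)"
    by (simp add: infsum_cmult_right')
  also have "\<dots> = (\<Sum>f\<in>PF. cp f * (\<Sum>r<b. if (\<forall>i\<in>I. int b dvd (int r + (h i - int (f i))))
       then W p b I n (\<lambda>i. (int r + (h i - int (f i))) div int b) else 0))"
    unfolding Z ..
  finally show ?thesis unfolding PF_def cp_def .
qed

lemma div_bounds:
  fixes x A b :: int
  assumes "b \<ge> 2" "A \<ge> 0" "-A*b \<le> x" "x < (A+1)*b"
  shows "-A \<le> x div b \<and> x div b \<le> A"
proof
  have "(-A*b) div b \<le> x div b" using assms by (intro zdiv_mono1) auto
  moreover have "(-A*b) div b = -A" using assms(1) by (intro nonzero_mult_div_cancel_right) simp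
  ultimately show "-A \<le> x div b" by simp
next
  have m: "b * (x div b) + x mod b = x" by (rule mult_div_mod_eq)
  have m0: "x mod b \<ge> 0" using assms by simp
  have xl: "x < b * (A + 1)" using assms by (simp add: mult.commute)
  show "x div b \<le> A"
  proof (rule ccontr)
    assume "\<not> x div b \<le> A"
    then have "A + 1 \<le> x div b" by simp
    then have "b * (A + 1) \<le> b * (x div b)" using assms by (intro mult_left_mono) auto
    then show False using m m0 xl by linarith
  qed
qed

lemma step_bounds:
  fixes h f r A b :: int
  assumes b: "b \<ge> 2" and A: "A \<ge> 0" "f \<le> A" and h: "-A \<le> h" "h \<le> A"
    and f: "0 \<le> f" and r: "0 \<le> r" "r < b"
  shows "-A \<le> (r + (h - f)) div b \<and> (r + (h - f)) div b \<le> A"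
proof (rule div_bounds[OF b A(1)])
  have "A * 2 \<le> A * b" using b A by (intro mult_left_mono) auto
  then show "-A*b \<le> r + (h - f)" using assms by linarith
  have "A * 2 \<le> A * b" using b A by (intro mult_left_mono) auto
  then show "r + (h - f) < (A+1)*b" using assms by (simp add: algebra_simps)
qed

theorem theorem4p1:
  fixes p q :: "complex poly" and b :: nat and \<alpha> :: "nat list"
  assumes "b \<ge> 2"
    and "\<exists>j<length \<alpha>. \<alpha> ! j > 0"
  shows "\<exists>P Q :: complex poly. poly Q 0 \<noteq> 0 \<and>
           Abs_fps (u p q b \<alpha>) = fps_of_poly P / fps_of_poly Q"
proof -
  have b: "b > 0" and b2: "int b \<ge> 2" using assms(1) by auto
  define m where "m = length \<alpha>"
  define I where "I = Sigma {..<m} (\<lambda>j. {..<\<alpha> ! j})"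
  obtain j0 where j0: "j0 < m" "\<alpha> ! j0 > 0" using assms(2) m_def by auto
  have i0: "(j0, 0) \<in> I" using j0 by (simp add: I_def)
  have I: "finite I" by (simp add: I_def)
  define A :: int where "A = int (max (max 1 (degree p)) (max m (degree q)))"
  have A0: "A \<ge> 0" and Ap: "int (degree p) \<le> A" and Aq: "int (degree q) \<le> A"
    and Am: "int m \<le> A" by (auto simp: A_def)
  define H where "H = PiE I (\<lambda>_. {-A..A})"
  have H: "finite H" by (simp add: H_def I finite_PiE)
  define PF where "PF = PiE I (\<lambda>_. {..degree p})"
  have PF: "finite PF" by (simp add: PF_def I finite_PiE)
  define J where "J = PF \<times> {..<b}"
  have J: "finite J" by (simp add: J_def PF)
  define v where "v n h = (if h \<in> H then W p b I n h else 0)" for n h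
  define C where "C h f r \<longleftrightarrow> (\<forall>i\<in>I. int b dvd (int r + (h i - int (f i))))"
    for h :: "nat \<times> nat \<Rightarrow> int" and f :: "nat \<times> nat \<Rightarrow> nat" and r :: nat
  define T where "T h jj = (if h \<in> H \<and> C h (fst jj) (snd jj) then (\<Prod>i\<in>I. coeff p (fst jj i)) else 0)"
    for h jj
  define \<sigma> where "\<sigma> h jj = restrict (\<lambda>i. (int (snd jj) + (h i - int (fst jj i))) div int b) I"
    for h :: "nat \<times> nat \<Rightarrow> int" and jj :: "(nat \<times> nat \<Rightarrow> nat) \<times> nat"
  have \<sigma>H: "\<sigma> h (f, r) \<in> H" if "h \<in> H" "f \<in> PF" "r < b" for h f r
  proof -
    have "\<forall>i\<in>I. (int r + (h i - int (f i))) div int b \<in> {-A..A}"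
    proof
      fix i assume i: "i \<in> I"
      have "h i \<in> {-A..A}" "f i \<le> degree p" using that i by (auto simp: H_def PF_def PiE_iff)
      then show "(int r + (h i - int (f i))) div int b \<in> {-A..A}"
        using step_bounds[OF b2 A0, of "int (f i)" "h i" "int r"] Ap that by auto
    qed
    then show ?thesis by (simp add: \<sigma>_def H_def)
  qed
  have supp: "v n h = 0" if "h \<notin> H" for n h using that by (simp add: v_def)
  have rec: "v (Suc n) h = (\<Sum>jj\<in>J. T h jj * v n (\<sigma> h jj))" for n h
  proof (cases "h \<in> H")
    case False
    then show ?thesis by (simp add: v_def T_def)
  next
    case True
    have "v (Suc n) h = (\<Sum>f\<in>PF. (\<Prod>i\<in>I. coeff p (f i)) *
      (\<Sum>r<b. if C h f r then W p b I n (\<lambda>i. (int r + (h i - int (f i))) div int b) else 0))"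
      using True W_Suc[OF b I i0, of p n h] by (simp add: v_def PF_def C_def)
    also have "\<dots> = (\<Sum>f\<in>PF. \<Sum>r<b. T h (f, r) * v n (\<sigma> h (f, r)))"
    proof (rule sum.cong[OF refl])
      fix f assume f: "f \<in> PF"
      have "(\<Prod>i\<in>I. coeff p (f i)) *
        (if C h f r then W p b I n (\<lambda>i. (int r + (h i - int (f i))) div int b) else 0)
        = T h (f, r) * v n (\<sigma> h (f, r))" if r: "r \<in> {..<b}" for r
      proof (cases "C h f r")
        case True
        have "W p b I n (\<lambda>i. (int r + (h i - int (f i))) div int b) = W p b I n (\<sigma> h (f, r))"
          by (rule W_cong) (simp add: \<sigma>_def)
        then show ?thesis using True \<open>h \<in> H\<close> \<sigma>H[OF \<open>h \<in> H\<close> f] r by (simp add: T_def v_def)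
      qed (simp add: T_def)
      then show "(\<Prod>i\<in>I. coeff p (f i)) *
        (\<Sum>r<b. if C h f r then W p b I n (\<lambda>i. (int r + (h i - int (f i))) div int b) else 0) =
        (\<Sum>r<b. T h (f, r) * v n (\<sigma> h (f, r)))"
        by (simp add: sum_distrib_left)
    qed
    also have "\<dots> = (\<Sum>jj\<in>J. T h jj * v n (\<sigma> h jj))"
      unfolding J_def by (simp add: sum.cartesian_product)
    finally show ?thesis .
  qed
  obtain k a where ka: "\<And>n h. v (n + k) h = (\<Sum>i<k. a i * v (n + i) h)"
  proof -
    have "\<exists>k a. \<forall>n h. v (n + k) h = (\<Sum>i<k. a i * v (n + i) h)"
    proof (rule lin_rec_exists[OF H J])
      show "\<And>n h. h \<notin> H \<Longrightarrow> v n h = 0" by (rule supp)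
      show "\<And>n h. v (Suc n) h = (\<Sum>jj\<in>J. T h jj * v n (\<sigma> h jj))" by (rule rec)
    qed
    then show ?thesis using that by blast
  qed
  define PQ where "PQ = PiE I (\<lambda>_. {..degree q})"
  have PQ: "finite PQ" by (simp add: PQ_def I finite_PiE)
  define \<tau> where "\<tau> f = restrict (\<lambda>i. int (fst i) - int (f i)) I" for f :: "nat \<times> nat \<Rightarrow> nat"
  define cq where "cq f = (\<Prod>i\<in>I. coeff q (f i))" for f :: "nat \<times> nat \<Rightarrow> nat"
  have \<tau>H: "\<tau> f \<in> H" if "f \<in> PQ" for f
  proof -
    have "\<forall>i\<in>I. int (fst i) - int (f i) \<in> {-A..A}"
    proof
      fix i assume i: "i \<in> I"
      have "f i \<le> degree q" "fst i < m" using that i by (auto simp: PQ_def PiE_iff I_def)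
      then show "int (fst i) - int (f i) \<in> {-A..A}" using Aq Am by auto
    qed
    then show ?thesis by (simp add: \<tau>_def H_def)
  qed
  have uexp: "u p q b \<alpha> n = (\<Sum>f\<in>PQ. cq f * v n (\<tau> f))" for n
  proof -
    have pe: "(\<Prod>j<length \<alpha>. cF p q b n (k' + int j) ^ (\<alpha> ! j)) =
        (\<Sum>f\<in>PQ. cq f * (\<Prod>i\<in>I. gg p b n (k' + (int (fst i) - int (f i)))))" for k'
    proof -
      have "(\<Prod>j<length \<alpha>. cF p q b n (k' + int j) ^ (\<alpha> ! j)) =
          (\<Prod>j<m. \<Prod>t<\<alpha> ! j. cF p q b n (k' + int j))"
        by (simp add: m_def)
      also have "\<dots> = (\<Prod>i\<in>I. cF p q b n (k' + int (fst i)))"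
        unfolding I_def by (subst prod.Sigma) (auto simp: case_prod_beta')
      also have "\<dots> = (\<Prod>i\<in>I. \<Sum>l\<le>degree q. coeff q l * gg p b n (k' + (int (fst i) - int l)))"
        by (simp add: cF_expand algebra_simps)
      also have "\<dots> = (\<Sum>f\<in>PQ. \<Prod>i\<in>I. coeff q (f i) * gg p b n (k' + (int (fst i) - int (f i))))"
        unfolding PQ_def by (rule prod_sum_PiE) (use I in auto)
      also have "\<dots> = (\<Sum>f\<in>PQ. cq f * (\<Prod>i\<in>I. gg p b n (k' + (int (fst i) - int (f i)))))"
        by (simp add: cq_def prod.distrib)
      finally show ?thesis .
    qed
    have "u p q b \<alpha> n = infsum (\<lambda>k'. \<Sum>f\<in>PQ. cq f * (\<Prod>i\<in>I. gg p b n (k' + (int (fst i) - int (f i))))) UNIV"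
      unfolding u_def pe ..
    also have "\<dots> = (\<Sum>f\<in>PQ. infsum (\<lambda>k'. cq f * (\<Prod>i\<in>I. gg p b n (k' + (int (fst i) - int (f i))))) UNIV)"
      by (rule infsum_sum_fsupp[OF PQ]) (intro fsupp_cmult fsupp_prod[OF I i0 fsupp_gg])
    also have "\<dots> = (\<Sum>f\<in>PQ. cq f * W p b I n (\<lambda>i. int (fst i) - int (f i)))"
      by (simp add: infsum_cmult_right' W_def)
    also have "\<dots> = (\<Sum>f\<in>PQ. cq f * v n (\<tau> f))"
    proof (rule sum.cong[OF refl])
      fix f assume f: "f \<in> PQ"
      have "W p b I n (\<lambda>i. int (fst i) - int (f i)) = W p b I n (\<tau> f)"
        by (rule W_cong) (simp add: \<tau>_def)
      then show "cq f * W p b I n (\<lambda>i. int (fst i) - int (f i)) = cq f * v n (\<tau> f)"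
        using \<tau>H[OF f] by (simp add: v_def)
    qed
    finally show ?thesis .
  qed
  have urec: "u p q b \<alpha> (n + k) = (\<Sum>i<k. a i * u p q b \<alpha> (n + i))" for n
  proof -
    have "u p q b \<alpha> (n + k) = (\<Sum>f\<in>PQ. cq f * (\<Sum>i<k. a i * v (n + i) (\<tau> f)))"
      unfolding uexp ka ..
    also have "\<dots> = (\<Sum>f\<in>PQ. \<Sum>i<k. a i * (cq f * v (n + i) (\<tau> f)))"
      by (simp add: sum_distrib_left mult.left_commute)
    also have "\<dots> = (\<Sum>i<k. \<Sum>f\<in>PQ. a i * (cq f * v (n + i) (\<tau> f)))"
      by (rule sum.swap)
    also have "\<dots> = (\<Sum>i<k. a i * u p q b \<alpha> (n + i))"
      unfolding uexp by (simp add: sum_distrib_left)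
    finally show ?thesis .
  qed
  show ?thesis by (rule rec_gf[OF urec])
qed

end
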